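(* Let $E$ be a locally convex topological vector space with a family of seminorms $\mathfrak P$ and let $\xi\in\mathscr D'(\mathbb R^d;E)$. Suppose there exists a kernel $K\in\mathfrak N^\zeta$ with $\zeta\in(-|\mathfrak s|,0)$ such that for every $\mathfrak p\in\mathfrak P$ there is a constant $C_{\mathfrak p}$ with $\mathfrak p(\xi(f))^2\le C_{\mathfrak p}\,|\langle f,K*f\rangle_{L^2(\mathbb R^d)}|$ for all $f\in\mathscr D(\mathbb R^d)$. Then $\xi\in\mathcal C^{\zeta/2}_{\mathfrak s}(\mathbb R^d;E)$. The same holds true with $\mathbb R^d$ replaced by $\mathbb R^d\times\mathbb T^k$.
   Context: Fix a scaling $\mathfrak s=(\mathfrak s_1,\dots,\mathfrak s_d)$ of positive integers, $|\mathfrak s|=\sum_i\mathfrak s_i$, $\|x\|_{\mathfrak s}=\sum_i|x_i|^{1/\mathfrak s_i}$, $|k|_{\mathfrak s}=\sum_i\mathfrak s_ik_i$ for multi-indices $k$, and $\mathcal S^\lambda_{\mathfrak s,x}\eta(y)=\lambda^{-|\mathfrak s|}\eta(\lambda^{-\mathfrak s_1}(y_1-x_1),\dots,\lambda^{-\mathfrak s_d}(y_d-x_d))$. $\mathscr D'(\mathbb R^d;E)$ is the space of continuous linear maps $\mathscr D(\mathbb R^d)\to E$. For $\zeta\in\mathbb R$, $\mathfrak N^\zeta$ is the set of kernels $K\colon\mathbb R^d\setminus\{0\}\to\mathbb C$, smooth and with compact support, such that for every $m\in\mathbb N$, $\sup_{|k|_{\mathfrak s}\le m}\sup_{z\ne0}\|z\|_{\mathfrak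 s}^{|k|_{\mathfrak s}-\zeta}|D^kK(z)|<\infty$. Hölder–Besov spaces: for $r\in\mathbb N$, $\mathcal B^r$ is the set of $\eta\in\mathscr D(\mathbb R^d)$ supported in $\{\|y\|_{\mathfrak s}\le1\}$ with $\|\eta\|_{\mathscr C^r}\le1$ and $\mathcal B^{r,\alpha}$ the subset of those annihilating all polynomials of scaled degree $\le\alpha$. For $\alpha\in\mathbb R$ and a fixed integer $r>|\alpha|$, $\xi\in\mathcal C^\alpha_{\mathfrak s}(\mathbb R^d;E)$ iff for every compact $\mathfrak K$ and $\mathfrak p\in\mathfrak P$, $\sup_{x\in\mathfrak K}\sup_{\eta\in\mathcal B^{r,\alpha}}\sup_{\lambda\in(0,1]}\lambda^{-\alpha}\mathfrak p(\xi(\mathcal S^\lambda_{\mathfrak s,x}\eta))+\sup_{x\in\mathfrak K}\sup_{\eta\in\mathcal B^r}\mathfrak p(\xi(\mathcal S^1_{\mathfrak s,x}\eta))<\infty$. Distributions on a product with a torus are identified with distributions on Euclidean space periodic in the torus variables, and the corresponding Hölder–Besov space is the subspace of periodic elements. *)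

theory Defs
  imports "HOL-Analysis.Analysis"
begin

text \<open>Space: R^n = real^'n.  A set T of coordinates is treated as torus (period 1)
  coordinates; T = {} is the Euclidean case R^d, otherwise R^d x T^k with
  d = card(-T), k = card T.\<close>

definition is_seminorm :: "('e::real_vector \<Rightarrow> real) \<Rightarrow> bool" where
  "is_seminorm p \<longleftrightarrow> (\<forall>x. 0 \<le> p x) \<and> (\<forall>a x. p (a *\<^sub>R x) = \<bar>a\<bar> * p x)
     \<and> (\<forall>x y. p (x + y) \<le> p x + p y)"

definition partial :: "'n::finite \<Rightarrow> (real^'n \<Rightarrow> 'a::real_normed_vector) \<Rightarrow> real^'n \<Rightarrow> 'a" where
  "partial i f x = vector_derivative (\<lambda>t. f (x + t *\<^sub>R axis i 1)) (at 0)"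

fun Dlist :: "'n::finite list \<Rightarrow> (real^'n \<Rightarrow> 'a::real_normed_vector) \<Rightarrow> real^'n \<Rightarrow> 'a" where
  "Dlist [] f = f"
| "Dlist (i # is) f = partial i (Dlist is f)"

definition smooth_on :: "(real^'n::finite) set \<Rightarrow> (real^'n \<Rightarrow> 'a::real_normed_vector) \<Rightarrow> bool" where
  "smooth_on U f \<longleftrightarrow> (\<forall>is. continuous_on U (Dlist is f) \<and>
     (\<forall>i. \<forall>x\<in>U. (\<lambda>t. Dlist is f (x + t *\<^sub>R axis i 1)) differentiable (at 0)))"

text \<open>Lattice Z^T (integer in torus coordinates, zero elsewhere); the points identified with 0.\<close>
definition lattice :: "'n::finite set \<Rightarrow> (real^'n) set" where
  "lattice T = {m. (\<forall>i. i \<notin> T \<longrightarrow> m $ i = 0) \<and> (\<forall>i\<in>T. m $ i \<in> \<int>)}"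

definition cell :: "'n::finite set \<Rightarrow> (real^'n) set" where
  "cell T = {y. \<forall>i\<in>T. 0 \<le> y $ i \<and> y $ i < 1}"

definition periodic_in :: "'n::finite set \<Rightarrow> (real^'n \<Rightarrow> 'a) \<Rightarrow> bool" where
  "periodic_in T f \<longleftrightarrow> (\<forall>i\<in>T. \<forall>x. f (x + axis i 1) = f x)"

text \<open>Support compact in R^d x T^k: bounded in the non-torus coordinates.\<close>
definition supp_bounded :: "'n::finite set \<Rightarrow> real \<Rightarrow> (real^'n \<Rightarrow> 'a::zero) \<Rightarrow> bool" where
  "supp_bounded T R f \<longleftrightarrow> (\<forall>x. f x \<noteq> 0 \<longrightarrow> (\<forall>i. i \<notin> T \<longrightarrow> \<bar>x $ i\<bar> \<le> R))"

text \<open>Test functions D(R^d x T^k) (real valued), identified with periodic functions.\<close>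
definition test_fn :: "'n::finite set \<Rightarrow> (real^'n \<Rightarrow> real) \<Rightarrow> bool" where
  "test_fn T f \<longleftrightarrow> smooth_on UNIV f \<and> periodic_in T f \<and> (\<exists>R. supp_bounded T R f)"

text \<open>C^r norm: sup of all derivatives of (unscaled) order at most r.\<close>
definition Cnorm :: "nat \<Rightarrow> (real^'n::finite \<Rightarrow> real) \<Rightarrow> real" where
  "Cnorm r f = (SUP ix \<in> {(is, x). length is \<le> r}. \<bar>Dlist (fst ix) f (snd ix)\<bar>)"

definition distribution :: "'n::finite set \<Rightarrow> ('e::real_vector \<Rightarrow> real) set
    \<Rightarrow> ((real^'n \<Rightarrow> real) \<Rightarrow> 'e) \<Rightarrow> bool" where
  "distribution T P xi \<longleftrightarrow>
     (\<forall>f g. test_fn T f \<and> test_fn T g \<longrightarrow> xi (\<lambda>x. f x + g x) = xi f + xi g) \<and>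
     (\<forall>a f. test_fn T f \<longrightarrow> xi (\<lambda>x. a * f x) = a *\<^sub>R xi f) \<and>
     (\<forall>p\<in>P. \<forall>R. \<exists>C r. \<forall>f. test_fn T f \<and> supp_bounded T R f \<longrightarrow> p (xi f) \<le> C * Cnorm r f)"

definition ssum :: "('n::finite \<Rightarrow> nat) \<Rightarrow> real" where
  "ssum s = (\<Sum>i\<in>UNIV. real (s i))"

definition snorm :: "('n::finite \<Rightarrow> nat) \<Rightarrow> real^'n \<Rightarrow> real" where
  "snorm s x = (\<Sum>i\<in>UNIV. \<bar>x $ i\<bar> powr (1 / real (s i)))"

definition tnorm :: "('n::finite \<Rightarrow> nat) \<Rightarrow> 'n set \<Rightarrow> real^'n \<Rightarrow> real" where
  "tnorm s T x = (\<Sum>i\<in>UNIV. (if i \<in> T then \<bar>x $ i - of_int (round (x $ i))\<bar> else \<bar>x $ i\<bar>)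
                               powr (1 / real (s i)))"

definition scale :: "('n::finite \<Rightarrow> nat) \<Rightarrow> real \<Rightarrow> real^'n \<Rightarrow> (real^'n \<Rightarrow> real) \<Rightarrow> real^'n \<Rightarrow> real" where
  "scale s l x eta = (\<lambda>y. l powr (- ssum s) *
      eta (\<chi> i. l powr (- real (s i)) * (y $ i - x $ i)))"

definition kernel_class :: "('n::finite \<Rightarrow> nat) \<Rightarrow> 'n set \<Rightarrow> real \<Rightarrow> (real^'n \<Rightarrow> complex) \<Rightarrow> bool" where
  "kernel_class s T zeta K \<longleftrightarrow> periodic_in T K \<and> smooth_on (- lattice T) K \<and>
     (\<exists>R. supp_bounded T R K) \<and>
     (\<forall>m::nat. \<exists>C. \<forall>is z. sum_list (map s is) \<le> m \<longrightarrow> z \<notin> lattice T \<longrightarrow>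
        tnorm s T z powr (real (sum_list (map s is)) - zeta) * norm (Dlist is K z) \<le> C)"

definition conv :: "'n::finite set \<Rightarrow> (real^'n \<Rightarrow> complex) \<Rightarrow> (real^'n \<Rightarrow> real) \<Rightarrow> real^'n \<Rightarrow> complex" where
  "conv T K f x = integral\<^sup>L lborel (\<lambda>y. indicator (cell T) y *\<^sub>R (K (x - y) * complex_of_real (f y)))"

definition pairing :: "'n::finite set \<Rightarrow> (real^'n \<Rightarrow> real) \<Rightarrow> (real^'n \<Rightarrow> complex) \<Rightarrow> complex" where
  "pairing T f K = integral\<^sup>L lborel (\<lambda>x. indicator (cell T) x *\<^sub>R (complex_of_real (f x) * conv T K f x))"

text \<open>Periodisation: identifies a distribution on R^d x T^k with a periodic one on R^(d+k).\<close>
definition periodize :: "'n::finite set \<Rightarrow> (real^'n \<Rightarrow> real) \<Rightarrow> real^'n \<Rightarrow> real" where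
  "periodize T phi x = infsum (\<lambda>m. phi (x + m)) (lattice T)"

definition Bset :: "('n::finite \<Rightarrow> nat) \<Rightarrow> nat \<Rightarrow> (real^'n \<Rightarrow> real) set" where
  "Bset s r = {eta. test_fn {} eta \<and> (\<forall>y. eta y \<noteq> 0 \<longrightarrow> snorm s y \<le> 1) \<and> Cnorm r eta \<le> 1}"

definition Bmom :: "('n::finite \<Rightarrow> nat) \<Rightarrow> nat \<Rightarrow> real \<Rightarrow> (real^'n \<Rightarrow> real) set" where
  "Bmom s r alpha = {eta \<in> Bset s r. \<forall>k::'n \<Rightarrow> nat. real (\<Sum>i\<in>UNIV. s i * k i) \<le> alpha \<longrightarrow>
      integral UNIV (\<lambda>y. eta y * (\<Prod>i\<in>UNIV. (y $ i) ^ k i)) = 0}"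

definition holder_besov :: "('n::finite \<Rightarrow> nat) \<Rightarrow> real \<Rightarrow> ('e \<Rightarrow> real) set
    \<Rightarrow> ((real^'n \<Rightarrow> real) \<Rightarrow> 'e) \<Rightarrow> bool" where
  "holder_besov s alpha P u \<longleftrightarrow>
     (\<forall>r::nat. real r > \<bar>alpha\<bar> \<longrightarrow> (\<forall>Kc p. compact Kc \<and> p \<in> P \<longrightarrow>
        (\<exists>C. \<forall>x\<in>Kc. \<forall>eta\<in>Bmom s r alpha. \<forall>l\<in>{0<..1}.
            l powr (- alpha) * p (u (scale s l x eta)) \<le> C) \<and>
        (\<exists>C. \<forall>x\<in>Kc. \<forall>eta\<in>Bset s r. p (u (scale s 1 x eta)) \<le> C)))"

end

theory Submission
  imports Defs
begin

lemma nn_prod_vec: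
  fixes g :: "'n::finite \<Rightarrow> real \<Rightarrow> ennreal"
  assumes [measurable]: "\<And>i. g i \<in> borel_measurable borel"
  shows "(\<integral>\<^sup>+x. (\<Prod>i\<in>UNIV. g i (x$i)) \<partial>lborel) = (\<Prod>i\<in>UNIV. \<integral>\<^sup>+x. g i x \<partial>lborel)"
proof -
  define idx :: "real^'n \<Rightarrow> 'n" where "idx b = (SOME i. b = axis i 1)" for b
  have idx: "idx (axis i 1) = i" for i
    unfolding idx_def by (rule some_equality) (auto simp: axis_eq_axis)
  have B: "(Basis :: (real^'n) set) = (\<lambda>i. axis i 1) ` UNIV"
    by (auto simp: Basis_vec_def)
  have inj: "inj (\<lambda>i::'n. axis i (1::real))"
    by (auto simp: inj_def axis_eq_axis)
  define f where "f b = g (idx b)" for b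
  have "(\<Prod>i\<in>UNIV. g i (x$i)) = (\<Prod>b\<in>Basis. f b (x \<bullet> b))" for x :: "real^'n"
    unfolding B f_def by (subst prod.reindex[OF inj]) (simp_all add: idx inner_axis)
  hence "(\<integral>\<^sup>+x. (\<Prod>i\<in>UNIV. g i (x$i)) \<partial>lborel) = (\<integral>\<^sup>+x. (\<Prod>b\<in>Basis. f b (x \<bullet> b)) \<partial>(lborel :: (real^'n) measure))"
    by simp
  also have "\<dots> = (\<Prod>b\<in>Basis. (\<integral>\<^sup>+x. f b x \<partial>lborel))"
    by (rule nn_integral_lborel_prod) (auto simp: f_def)
  also have "\<dots> = (\<Prod>i\<in>UNIV. \<integral>\<^sup>+x. g i x \<partial>lborel)"
    unfolding B f_def by (subst prod.reindex[OF inj]) (simp_all add: idx)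
  finally show ?thesis .
qed

definition epow :: "real \<Rightarrow> real \<Rightarrow> ennreal" where
  "epow b v = (if v = 0 then \<infinity> else ennreal (v powr b))"

lemma epow_measurable[measurable]: "epow b \<in> borel_measurable borel"
  unfolding epow_def by measurable

lemma half_int:
  assumes "-1 < b" "0 \<le> a"
  shows "(\<integral>\<^sup>+u. ennreal (indicator {0..a} u * u powr b) \<partial>lborel) = ennreal (a powr (b+1) / (b+1))"
  using nn_integral_has_integral_lebesgue[OF _ has_integral_powr_from_0[OF assms(1) assms(2)]]
  by (simp add: indicator_def)

lemma J_bound:
  assumes "-1 < b" "0 \<le> a"
  shows "(\<integral>\<^sup>+u. epow b \<bar>u\<bar> * indicator {-a..a} u \<partial>lborel) \<le> ennreal (2 * (a powr (b+1) / (b+1)))"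
proof -
  have "(\<integral>\<^sup>+u. epow b \<bar>u\<bar> * indicator {-a..a} u \<partial>lborel)
      = (\<integral>\<^sup>+u. ennreal (\<bar>u\<bar> powr b * indicator {-a..a} u) \<partial>lborel)"
    by (rule nn_integral_cong_AE) (use AE_lborel_singleton[of 0] in \<open>eventually_elim, auto simp: epow_def indicator_def\<close>)
  also have "\<dots> \<le> (\<integral>\<^sup>+u. ennreal (indicator {0..a} u * u powr b) + ennreal (indicator {0..a} (-u) * (-u) powr b) \<partial>lborel)"
    by (rule nn_integral_mono) (auto simp: indicator_def ennreal_plus[symmetric] simp del: ennreal_plus)
  also have "\<dots> = (\<integral>\<^sup>+u. ennreal (indicator {0..a} u * u powr b) \<partial>lborel) + (\<integral>\<^sup>+u. ennreal (indicator {0..a} (-u) * (-u) powr b) \<partial>lborel)"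
    by (rule nn_integral_add) auto
  also have "(\<integral>\<^sup>+u. ennreal (indicator {0..a} (-u) * (-u) powr b) \<partial>lborel) = (\<integral>\<^sup>+u. ennreal (indicator {0..a} u * u powr b) \<partial>lborel)"
    using nn_integral_real_affine[of "\<lambda>u. ennreal (indicator {0..a} u * u powr b)" "-1" 0] by simp
  finally have "(\<integral>\<^sup>+u. epow b \<bar>u\<bar> * indicator {-a..a} u \<partial>lborel) \<le> ennreal (a powr (b+1) / (b+1)) + ennreal (a powr (b+1) / (b+1))"
    using half_int[OF assms] by simp
  also have "\<dots> = ennreal (2 * (a powr (b+1) / (b+1)))"
    using assms by (subst ennreal_plus[symmetric]) auto
  finally show ?thesis .
qed

definition tc :: "'n set \<Rightarrow> 'n \<Rightarrow> real \<Rightarrow> real" where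
  "tc T i u = (if i \<in> T then \<bar>u - of_int (round u)\<bar> else \<bar>u\<bar>)"

lemma tnorm_tc: "tnorm s T z = (\<Sum>i\<in>UNIV. tc T i (z$i) powr (1 / real (s i)))"
  unfolding tnorm_def tc_def by (rule sum.cong) auto

lemma ssum_pos: assumes "\<forall>i. 0 < s i" shows "0 < ssum (s::'n::finite \<Rightarrow> nat)"
proof -
  obtain i :: 'n where True by auto
  have "real (s i) \<le> ssum s" unfolding ssum_def by (rule member_le_sum) auto
  thus ?thesis using assms[rule_format, of i] by linarith
qed

lemma tc_nonneg: "0 \<le> tc T i u" by (simp add: tc_def)

lemma epow_nonzero: "epow b v \<noteq> 0" if "0 \<le> v"
  using that by (auto simp: epow_def)

lemma K_pt:
  fixes s :: "'n::finite \<Rightarrow> nat" and K :: "real^'n \<Rightarrow> complex"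
  assumes s_pos: "\<forall>i. 0 < s i" and zeta: "zeta < 0" and C0: "0 < C0"
    and KB: "\<forall>z. z \<notin> lattice T \<longrightarrow> tnorm s T z powr (- zeta) * cmod (K z) \<le> C0"
  shows "ennreal (cmod (K z)) \<le> ennreal C0 * (\<Prod>i\<in>UNIV. epow (zeta / ssum s) (tc T i (z$i)))"
proof (cases "\<exists>i. tc T i (z$i) = 0")
  case True
  then obtain i where i: "tc T i (z$i) = 0" by auto
  have "(\<Prod>i\<in>UNIV. epow (zeta / ssum s) (tc T i (z$i))) = top"
    using i by (subst ennreal_prod_eq_top) (auto intro!: epow_nonzero tc_nonneg exI[of _ i] simp: epow_def)
  thus ?thesis using C0 by (simp add: ennreal_mult_top)
next
  case False
  define S where "S = ssum s"
  have S: "0 < S" using ssum_pos[OF s_pos] by (simp add: S_def)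
  have pos: "0 < tc T i (z$i)" for i using False tc_nonneg[of T i "z$i"] by (metis order_le_less)
  have zl: "z \<notin> lattice T"
  proof
    assume "z \<in> lattice T"
    obtain i :: 'n where True by auto
    have "tc T i (z$i) = 0"
      using \<open>z \<in> lattice T\<close> unfolding lattice_def tc_def by (auto elim!: Ints_cases)
    thus False using pos[of i] by simp
  qed
  define tn where "tn = tnorm s T z"
  have le: "tc T i (z$i) powr (1 / real (s i)) \<le> tn" for i
    unfolding tn_def tnorm_tc by (rule member_le_sum) auto
  have tnpos: "0 < tn" using le[of undefined] pos[of undefined] by (smt (verit) powr_gt_zero)
  have "cmod (K z) \<le> C0 / tn powr (- zeta)"
    using KB zl tnpos by (simp add: tn_def field_simps mult.commute)
  also have "\<dots> = C0 * tn powr zeta" by (simp add: powr_minus divide_inverse)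
  also have "tn powr zeta = tn powr (\<Sum>i\<in>UNIV. zeta * real (s i) / S)"
  proof -
    have "(\<Sum>i\<in>UNIV. zeta * real (s i) / S) = zeta * (\<Sum>i\<in>UNIV. real (s i)) / S"
      by (simp add: sum_divide_distrib[symmetric] sum_distrib_left)
    also have "\<dots> = zeta" using S by (simp add: S_def ssum_def)
    finally show ?thesis by simp
  qed
  also have "\<dots> = (\<Prod>i\<in>UNIV. tn powr (zeta * real (s i) / S))"
    using tnpos by (simp add: powr_sum)
  also have "\<dots> \<le> (\<Prod>i\<in>UNIV. tc T i (z$i) powr (zeta / S))"
  proof (rule prod_mono, safe)
    fix i
    have "tn powr (zeta * real (s i) / S) \<le> (tc T i (z$i) powr (1 / real (s i))) powr (zeta * real (s i) / S)"
      by (rule powr_mono2') (use zeta S pos[of i] le[of i] in \<open>auto simp: divide_nonpos_pos mult_nonpos_nonneg\<close>)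
    also have "\<dots> = tc T i (z$i) powr (zeta / S)"
      using s_pos[rule_format, of i] by (simp add: powr_powr)
    finally show "tn powr (zeta * real (s i) / S) \<le> tc T i (z$i) powr (zeta / S)" .
  qed simp
  finally have "cmod (K z) \<le> C0 * (\<Prod>i\<in>UNIV. tc T i (z$i) powr (zeta / S))"
    using C0 by (simp add: mult_left_mono)
  hence "ennreal (cmod (K z)) \<le> ennreal (C0 * (\<Prod>i\<in>UNIV. tc T i (z$i) powr (zeta / S)))"
    by (rule ennreal_leI)
  also have "\<dots> = ennreal C0 * (\<Prod>i\<in>UNIV. epow (zeta / S) (tc T i (z$i)))"
  proof -
    have "(\<Prod>i\<in>UNIV. epow (zeta / S) (tc T i (z$i))) = (\<Prod>i\<in>UNIV. ennreal (tc T i (z$i) powr (zeta / S)))"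
      using pos by (intro prod.cong) (auto simp: epow_def less_le)
    thus ?thesis using C0 by (simp add: ennreal_mult prod_nonneg prod_ennreal)
  qed
  finally show ?thesis by (simp add: S_def)
qed

lemma card_Ints_interval:
  fixes a :: real and w :: nat
  shows "finite (\<int> \<inter> {a..a + real w}) \<and> card (\<int> \<inter> {a..a + real w}) \<le> w + 1"
proof -
  have sub: "\<int> \<inter> {a..a + real w} \<subseteq> of_int ` {\<lceil>a\<rceil>..\<lceil>a\<rceil> + int w}"
  proof
    fix k assume "k \<in> \<int> \<inter> {a..a + real w}"
    then obtain j where j: "k = of_int j" "a \<le> of_int j" "of_int j \<le> a + real w" by (auto elim: Ints_cases)
    have "\<lceil>a\<rceil> \<le> j" using j by (simp add: ceiling_le)
    moreover have "j \<le> \<lceil>a\<rceil> + int w"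
    proof -
      have "(of_int j::real) < of_int (\<lceil>a\<rceil> + int w + 1)" using j(3) le_of_int_ceiling[of a] by simp linarith
      hence "j < \<lceil>a\<rceil> + int w + 1" by (simp only: of_int_less_iff)
      thus ?thesis by simp
    qed
    ultimately show "k \<in> of_int ` {\<lceil>a\<rceil>..\<lceil>a\<rceil> + int w}" using j by auto
  qed
  have "card (\<int> \<inter> {a..a + real w}) \<le> card (of_int ` {\<lceil>a\<rceil>..\<lceil>a\<rceil> + int w} :: real set)"
    by (rule card_mono[OF _ sub]) auto
  also have "\<dots> \<le> card {\<lceil>a\<rceil>..\<lceil>a\<rceil> + int w}" by (rule card_image_le) auto
  also have "\<dots> = w + 1" by simp
  finally show ?thesis using finite_subset[OF sub] by auto
qed

lemma card_vec_box:
  fixes S :: "'n::finite \<Rightarrow> real set"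
  assumes "\<And>i. finite (S i)"
  shows "card {m::real^'n. \<forall>i. m$i \<in> S i} = (\<Prod>i\<in>UNIV. card (S i))"
proof -
  have "bij_betw vec_nth {m::real^'n. \<forall>i. m$i \<in> S i} (PiE UNIV S)"
    by (rule bij_betw_byWitness[where f'=vec_lambda]) (auto simp: PiE_UNIV_domain)
  hence "card {m::real^'n. \<forall>i. m$i \<in> S i} = card (PiE UNIV S)" by (rule bij_betw_same_card)
  also have "\<dots> = (\<Prod>i\<in>UNIV. card (S i))" by (simp add: card_PiE)
  finally show ?thesis .
qed

lemma finite_vec_box:
  fixes S :: "'n::finite \<Rightarrow> real set"
  assumes "\<And>i. finite (S i)"
  shows "finite {m::real^'n. \<forall>i. m$i \<in> S i}"
proof -
  have "{m::real^'n. \<forall>i. m$i \<in> S i} = vec_lambda ` PiE UNIV S"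
  proof (auto simp: PiE_UNIV_domain image_iff)
    fix x :: "real^'n" assume "\<forall>i. x $ i \<in> S i"
    thus "\<exists>xa\<in>Pi UNIV S. x = vec_lambda xa" by (intro bexI[of _ "vec_nth x"]) auto
  qed
  thus ?thesis using assms by (simp add: finite_PiE)
qed

definition SC :: "'n::finite set \<Rightarrow> ('n \<Rightarrow> real) \<Rightarrow> real^'n \<Rightarrow> real^'n \<Rightarrow> bool" where
  "SC T L x0 x \<longleftrightarrow> (\<forall>i. \<exists>k\<in>\<int>. (i \<notin> T \<longrightarrow> k = 0) \<and> \<bar>x$i + k - x0$i\<bar> \<le> L i)"

definition Ks :: "'n set \<Rightarrow> 'n \<Rightarrow> real set" where
  "Ks T i = (if i \<in> T then {-1,0,1} else {0})"

definition Ms :: "'n::finite set \<Rightarrow> real^'n \<Rightarrow> 'n \<Rightarrow> real set" where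
  "Ms T x0 i = (if i \<in> T then \<int> \<inter> {x0$i - 2 .. x0$i - 2 + real (3::nat)} else {0})"

definition Gf :: "'n set \<Rightarrow> ('n \<Rightarrow> real) \<Rightarrow> real \<Rightarrow> 'n \<Rightarrow> real \<Rightarrow> ennreal" where
  "Gf T L b i w = (\<Sum>k\<in>Ks T i. epow b \<bar>w - k\<bar> * indicator {-(2*L i)..2*L i} (w - k))"

definition Hf :: "'n::finite set \<Rightarrow> ('n \<Rightarrow> real) \<Rightarrow> real^'n \<Rightarrow> 'n \<Rightarrow> real \<Rightarrow> ennreal" where
  "Hf T L x0 i v = (\<Sum>k\<in>Ms T x0 i. indicator {x0$i - k - L i .. x0$i - k + L i} v)"

lemma finite_Ks: "finite (Ks T i)" and card_Ks: "card (Ks T i) \<le> 3"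
  unfolding Ks_def by (auto simp: card_insert_if)

lemma finite_Ms: "finite (Ms T x0 i)" and card_Ms: "card (Ms T x0 i) \<le> 4"
  unfolding Ms_def using card_Ints_interval[of "x0$i - 2" 3] by auto

lemma epow_mono: "b \<le> 0 \<Longrightarrow> 0 \<le> a \<Longrightarrow> a \<le> c \<Longrightarrow> epow b c \<le> epow b a"
  unfolding epow_def by (auto intro!: ennreal_leI powr_mono2')

lemma Gf_integral:
  assumes "-1 < b" "0 \<le> L i"
  shows "(\<integral>\<^sup>+v. Gf T L b i (x - v) \<partial>lborel) \<le> ennreal (3 * (2 * ((2 * L i) powr (b+1) / (b+1))))"
proof -
  have "(\<integral>\<^sup>+v. Gf T L b i (x - v) \<partial>lborel)
     = (\<Sum>k\<in>Ks T i. \<integral>\<^sup>+v. epow b \<bar>x - v - k\<bar> * indicator {-(2*L i)..2*L i} (x - v - k) \<partial>lborel)"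
    unfolding Gf_def by (rule nn_integral_sum) auto
  also have "\<dots> = (\<Sum>k\<in>Ks T i. \<integral>\<^sup>+u. epow b \<bar>u\<bar> * indicator {-(2*L i)..2*L i} u \<partial>lborel)"
  proof (rule sum.cong[OF refl])
    fix k
    show "(\<integral>\<^sup>+v. epow b \<bar>x - v - k\<bar> * indicator {-(2*L i)..2*L i} (x - v - k) \<partial>lborel)
        = (\<integral>\<^sup>+u. epow b \<bar>u\<bar> * indicator {-(2*L i)..2*L i} u \<partial>lborel)"
      using nn_integral_real_affine[of "\<lambda>u. epow b \<bar>u\<bar> * indicator {-(2*L i)..2*L i} u" "-1" "x - k"]
      by (simp add: algebra_simps)
  qed
  also have "\<dots> \<le> (\<Sum>k\<in>Ks T i. ennreal (2 * ((2 * L i) powr (b+1) / (b+1))))"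
    by (rule sum_mono) (rule J_bound, use assms in auto)
  also have "\<dots> = of_nat (card (Ks T i)) * ennreal (2 * ((2 * L i) powr (b+1) / (b+1)))"
    by simp
  also have "\<dots> \<le> of_nat 3 * ennreal (2 * ((2 * L i) powr (b+1) / (b+1)))"
    by (intro mult_right_mono) (use card_Ks[of T i] in auto)
  also have "\<dots> = ennreal (3 * (2 * ((2 * L i) powr (b+1) / (b+1))))"
  proof -
    have "0 \<le> 2 * ((2 * L i) powr (b+1) / (b+1))" using assms by auto
    thus ?thesis by (subst ennreal_mult) auto
  qed
  finally show ?thesis .
qed

lemma Hf_integral:
  assumes "0 \<le> L i"
  shows "(\<integral>\<^sup>+v. Hf T L x0 i v \<partial>lborel) \<le> ennreal (8 * L i)"
proof -
  have "(\<integral>\<^sup>+v. Hf T L x0 i v \<partial>lborel)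
     = (\<Sum>k\<in>Ms T x0 i. \<integral>\<^sup>+v. indicator {x0$i - k - L i .. x0$i - k + L i} v \<partial>lborel)"
    unfolding Hf_def by (rule nn_integral_sum) auto
  also have "\<dots> = (\<Sum>k\<in>Ms T x0 i. ennreal (2 * L i))"
    using assms by (intro sum.cong) auto
  also have "\<dots> = of_nat (card (Ms T x0 i)) * ennreal (2 * L i)" by simp
  also have "\<dots> \<le> of_nat 4 * ennreal (2 * L i)"
    by (intro mult_right_mono) (use card_Ms[of T x0 i] in auto)
  also have "\<dots> = ennreal (8 * L i)"
  proof -
    have "ennreal (8 * L i) = ennreal 8 * ennreal (L i)" by (rule ennreal_mult) (use assms in auto)
    moreover have "ennreal (2 * L i) = ennreal 2 * ennreal (L i)" by (rule ennreal_mult) (use assms in auto)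
    ultimately show ?thesis by (simp add: mult.assoc[symmetric])
  qed
  finally show ?thesis .
qed

lemma SC_diff:
  assumes "SC T L x0 x" "SC T L x0 y"
  shows "tc T i (x$i - y$i) \<le> 2 * L i"
proof -
  obtain kx where kx: "kx \<in> \<int>" "i \<notin> T \<longrightarrow> kx = 0" "\<bar>x$i + kx - x0$i\<bar> \<le> L i"
    using assms(1) unfolding SC_def by blast
  obtain ky where ky: "ky \<in> \<int>" "i \<notin> T \<longrightarrow> ky = 0" "\<bar>y$i + ky - x0$i\<bar> \<le> L i"
    using assms(2) unfolding SC_def by blast
  have d: "\<bar>x$i - y$i - (ky - kx)\<bar> \<le> 2 * L i" using kx ky by linarith
  show ?thesis
  proof (cases "i \<in> T")
    case True
    obtain m where m: "ky - kx = of_int m" using kx(1) ky(1) by (metis Ints_cases Ints_diff)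
    have "\<bar>x$i - y$i - of_int (round (x$i - y$i))\<bar> \<le> \<bar>x$i - y$i - of_int m\<bar>" by (rule round_diff_minimal)
    thus ?thesis using True d m by (simp add: tc_def)
  next
    case False thus ?thesis using d kx ky by (simp add: tc_def)
  qed
qed

lemma round_small:
  assumes "-1 < (w::real)" "w < 1"
  shows "of_int (round w) \<in> ({-1,0,1} :: real set)"
proof -
  have "round w \<ge> -1" "round w \<le> 1" using assms unfolding round_def by linarith+
  hence "round w \<in> {-1,0,1}" by auto
  thus ?thesis by auto
qed

lemma epow_le_Gf:
  assumes b: "b \<le> 0" and w: "tc T i w \<le> 2 * L i" and Tw: "i \<in> T \<Longrightarrow> -1 < w \<and> w < 1"
  shows "epow b (tc T i w) \<le> Gf T L b i w"
proof (cases "i \<in> T")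
  case True
  define k :: real where "k = of_int (round w)"
  have k: "k \<in> Ks T i" using round_small[of w] Tw True by (simp add: Ks_def k_def)
  have "epow b (tc T i w) = epow b \<bar>w - k\<bar> * indicator {-(2*L i)..2*L i} (w - k)"
    using True w by (auto simp: tc_def k_def indicator_def)
  also have "\<dots> \<le> Gf T L b i w" unfolding Gf_def
    by (rule member_le_sum[OF k]) (auto simp: finite_Ks)
  finally show ?thesis .
next
  case False
  thus ?thesis using w by (auto simp: Gf_def Ks_def tc_def indicator_def)
qed

lemma Hf_ge:
  assumes L: "L i \<le> 1" and SC: "SC T L x0 x" and cell: "x \<in> cell T"
  shows "1 \<le> Hf T L x0 i (x$i)"
proof -
  obtain k where k: "k \<in> \<int>" "i \<notin> T \<longrightarrow> k = 0" "\<bar>x$i + k - x0$i\<bar> \<le> L i"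
    using SC unfolding SC_def by blast
  have kM: "k \<in> Ms T x0 i"
  proof (cases "i \<in> T")
    case True
    hence "0 \<le> x$i" "x$i < 1" using cell by (auto simp: cell_def)
    thus ?thesis using True k L by (auto simp: Ms_def)
  qed (use k in \<open>auto simp: Ms_def\<close>)
  have "1 = indicator {x0$i - k - L i .. x0$i - k + L i} (x$i)"
    using k by (auto simp: indicator_def)
  also have "\<dots> \<le> Hf T L x0 i (x$i)" unfolding Hf_def
    by (rule member_le_sum[OF kM]) (auto simp: finite_Ms)
  finally show ?thesis by simp
qed

lemma Gf_meas[measurable]: "Gf T L b i \<in> borel_measurable borel"
  unfolding Gf_def by measurable

lemma Hf_meas[measurable]: "Hf T L x0 i \<in> borel_measurable borel"
  unfolding Hf_def by measurable

lemma prod_mono_ennreal: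
  fixes f g :: "'a \<Rightarrow> ennreal"
  shows "(\<And>i. i \<in> A \<Longrightarrow> f i \<le> g i) \<Longrightarrow> prod f A \<le> prod g A"
  by (induct A rule: infinite_finite_induct) (auto intro!: mult_mono)

lemma norm_integral_le_nn:
  fixes g :: "'a \<Rightarrow> 'b::{banach, second_countable_topology}"
  shows "ennreal (norm (integral\<^sup>L M g)) \<le> (\<integral>\<^sup>+x. ennreal (norm (g x)) \<partial>M)"
proof (cases "integrable M g")
  case True thus ?thesis by (rule integral_norm_bound_ennreal)
next
  case False thus ?thesis by (simp add: not_integrable_integral_eq)
qed

lemma pairing_bound:
  fixes f :: "real^'n::finite \<Rightarrow> real" and K :: "real^'n \<Rightarrow> complex"
  assumes L: "\<forall>i. 0 \<le> L i \<and> L i \<le> 1" and b: "-1 < b" "b \<le> 0" and A: "0 \<le> A" and C0: "0 \<le> C0"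
    and Kpt: "\<forall>z. ennreal (cmod (K z)) \<le> ennreal C0 * (\<Prod>i\<in>UNIV. epow b (tc T i (z$i)))"
    and fsup: "\<forall>x. f x \<noteq> 0 \<longrightarrow> SC T L x0 x" and fbd: "\<forall>x. \<bar>f x\<bar> \<le> A"
  shows "cmod (pairing T f K) \<le> A * (A * C0 * (\<Prod>i\<in>UNIV. 3*(2*((2*L i) powr (b+1)/(b+1))))) * (\<Prod>i\<in>UNIV. 8 * L i)"
proof -
  define GI where "GI = (\<Prod>i\<in>UNIV. 3*(2*((2*L i) powr (b+1)/(b+1))))"
  define HI where "HI = (\<Prod>i\<in>UNIV. 8 * L i)"
  define IB where "IB = A * C0 * GI"
  have GI: "0 \<le> GI" unfolding GI_def using b L by (intro prod_nonneg) auto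
  have HI: "0 \<le> HI" unfolding HI_def using L by (intro prod_nonneg) auto
  have IB: "0 \<le> IB" unfolding IB_def using A C0 GI by simp
  have inner: "ennreal (cmod (conv T K f x)) \<le> ennreal IB" if x: "x \<in> cell T" "SC T L x0 x" for x
  proof -
    have "ennreal (cmod (conv T K f x)) \<le> (\<integral>\<^sup>+y. ennreal (norm (indicator (cell T) y *\<^sub>R (K (x - y) * complex_of_real (f y)))) \<partial>lborel)"
      unfolding conv_def by (rule norm_integral_le_nn)
    also have "\<dots> \<le> (\<integral>\<^sup>+y. ennreal A * ennreal C0 * (\<Prod>i\<in>UNIV. Gf T L b i (x$i - y$i)) \<partial>lborel)"
    proof (rule nn_integral_mono)
      fix y :: "real^'n"
      show "ennreal (norm (indicator (cell T) y *\<^sub>R (K (x - y) * complex_of_real (f y))))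
          \<le> ennreal A * ennreal C0 * (\<Prod>i\<in>UNIV. Gf T L b i (x$i - y$i))"
      proof (cases "y \<in> cell T \<and> f y \<noteq> 0")
        case False thus ?thesis by (auto simp: indicator_def)
      next
        case True
        hence y: "y \<in> cell T" "SC T L x0 y" using fsup by auto
        have GG: "epow b (tc T i ((x - y)$i)) \<le> Gf T L b i (x$i - y$i)" for i
        proof -
          have w: "-1 < x$i - y$i \<and> x$i - y$i < 1" if "i \<in> T"
          proof -
            have "0 \<le> x$i" "x$i < 1" "0 \<le> y$i" "y$i < 1" using x(1) y(1) that by (auto simp: cell_def)
            thus ?thesis by linarith
          qed
          show ?thesis
            using epow_le_Gf[where w="x$i - y$i" and T=T and i=i and L=L, OF b(2) SC_diff[OF x(2) y(2), of i] w]
            by simp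
        qed
        have "ennreal (norm (indicator (cell T) y *\<^sub>R (K (x - y) * complex_of_real (f y))))
            = ennreal \<bar>f y\<bar> * ennreal (cmod (K (x - y)))"
          using y by (simp add: norm_mult ennreal_mult[symmetric] mult.commute)
        also have "\<dots> \<le> ennreal A * (ennreal C0 * (\<Prod>i\<in>UNIV. epow b (tc T i ((x - y)$i))))"
          by (intro mult_mono) (use fbd Kpt[rule_format, of "x - y"] in \<open>auto intro: ennreal_leI\<close>)
        also have "\<dots> \<le> ennreal A * (ennreal C0 * (\<Prod>i\<in>UNIV. Gf T L b i (x$i - y$i)))"
          by (intro mult_left_mono prod_mono_ennreal conjI) (use GG in \<open>auto intro: prod_mono_ennreal\<close>)
        finally show ?thesis by (simp add: mult.assoc)
      qed
    qed
    also have "\<dots> = ennreal A * ennreal C0 * (\<integral>\<^sup>+y. (\<Prod>i\<in>UNIV. (\<lambda>v. Gf T L b i (x$i - v)) (y$i)) \<partial>lborel)"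
      by (rule nn_integral_cmult) measurable
    also have "\<dots> = ennreal A * ennreal C0 * (\<Prod>i\<in>UNIV. \<integral>\<^sup>+v. Gf T L b i (x$i - v) \<partial>lborel)"
      by (subst nn_prod_vec) auto
    also have "\<dots> \<le> ennreal A * ennreal C0 * (\<Prod>i\<in>UNIV. ennreal (3*(2*((2*L i) powr (b+1)/(b+1)))))"
      by (intro mult_left_mono prod_mono_ennreal conjI Gf_integral) (use b L in auto)
    also have "\<dots> = ennreal IB"
      unfolding IB_def GI_def using A C0 b L
      by (simp add: prod_ennreal ennreal_mult prod_nonneg)
    finally show ?thesis .
  qed
  have "ennreal (cmod (pairing T f K)) \<le> (\<integral>\<^sup>+x. ennreal (norm (indicator (cell T) x *\<^sub>R (complex_of_real (f x) * conv T K f x))) \<partial>lborel)"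
    unfolding pairing_def by (rule norm_integral_le_nn)
  also have "\<dots> \<le> (\<integral>\<^sup>+x. ennreal A * ennreal IB * (\<Prod>i\<in>UNIV. Hf T L x0 i (x$i)) \<partial>lborel)"
  proof (rule nn_integral_mono)
    fix x :: "real^'n"
    show "ennreal (norm (indicator (cell T) x *\<^sub>R (complex_of_real (f x) * conv T K f x)))
        \<le> ennreal A * ennreal IB * (\<Prod>i\<in>UNIV. Hf T L x0 i (x$i))"
    proof (cases "x \<in> cell T \<and> f x \<noteq> 0")
      case False thus ?thesis by (auto simp: indicator_def)
    next
      case True
      hence x: "x \<in> cell T" "SC T L x0 x" using fsup by auto
      have "ennreal (norm (indicator (cell T) x *\<^sub>R (complex_of_real (f x) * conv T K f x)))
          = ennreal \<bar>f x\<bar> * ennreal (cmod (conv T K f x))"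
        using x by (simp add: norm_mult ennreal_mult[symmetric])
      also have "\<dots> \<le> ennreal A * ennreal IB"
        by (intro mult_mono inner x) (use fbd in \<open>auto intro: ennreal_leI\<close>)
      also have "\<dots> = ennreal A * ennreal IB * (\<Prod>i\<in>(UNIV::'n set). 1)" by simp
      also have "\<dots> \<le> ennreal A * ennreal IB * (\<Prod>i\<in>UNIV. Hf T L x0 i (x$i))"
        by (intro mult_left_mono prod_mono_ennreal conjI Hf_ge x) (use L in auto)
      finally show ?thesis .
    qed
  qed
  also have "\<dots> = ennreal A * ennreal IB * (\<integral>\<^sup>+x. (\<Prod>i\<in>UNIV. Hf T L x0 i (x$i)) \<partial>lborel)"
    by (rule nn_integral_cmult) measurable
  also have "\<dots> = ennreal A * ennreal IB * (\<Prod>i\<in>UNIV. \<integral>\<^sup>+v. Hf T L x0 i v \<partial>lborel)"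
    by (subst nn_prod_vec) auto
  also have "\<dots> \<le> ennreal A * ennreal IB * (\<Prod>i\<in>UNIV. ennreal (8 * L i))"
    by (intro mult_left_mono prod_mono_ennreal conjI Hf_integral) (use L in auto)
  also have "\<dots> = ennreal A * ennreal IB * ennreal HI"
    unfolding HI_def by (subst prod_ennreal) (use L in auto)
  also have "\<dots> = ennreal (A * IB * HI)"
    using A IB HI by (simp add: ennreal_mult)
  finally have "ennreal (cmod (pairing T f K)) \<le> ennreal (A * IB * HI)" .
  hence "cmod (pairing T f K) \<le> A * IB * HI"
    using A IB HI by (subst (asm) ennreal_le_iff) auto
  thus ?thesis unfolding IB_def GI_def HI_def .
qed

lemma periodize_local:
  assumes "finite F" "F \<subseteq> lattice T" "\<And>m. m \<in> lattice T \<Longrightarrow> m \<notin> F \<Longrightarrow> phi (x + m) = 0"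
  shows "periodize T phi x = (\<Sum>m\<in>F. phi (x + m))"
proof -
  have "periodize T phi x = infsum (\<lambda>m. phi (x + m)) F"
    unfolding periodize_def by (rule infsum_cong_neutral) (use assms in auto)
  thus ?thesis using assms(1) by simp
qed

lemma periodize_nonzero:
  assumes "periodize T phi x \<noteq> 0"
  shows "\<exists>m\<in>lattice T. phi (x + m) \<noteq> 0"
  using assms infsum_0[of "lattice T" "\<lambda>m. phi (x + m)"] unfolding periodize_def by blast

lemma Bset_supp:
  assumes "eta \<in> Bset s r" "eta y \<noteq> 0" "\<forall>i. 0 < s i"
  shows "\<bar>y$i\<bar> \<le> 1"
proof -
  have "snorm s y \<le> 1" using assms by (auto simp: Bset_def)
  moreover have "\<bar>y$i\<bar> powr (1 / real (s i)) \<le> snorm s y"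
    unfolding snorm_def by (rule member_le_sum) auto
  ultimately have le: "\<bar>y$i\<bar> powr (1 / real (s i)) \<le> 1" by linarith
  show ?thesis
  proof (rule ccontr)
    assume "\<not> \<bar>y$i\<bar> \<le> 1"
    hence "1 < \<bar>y$i\<bar> powr (1 / real (s i))"
      using assms(3) by (intro gr_one_powr) auto
    thus False using le by simp
  qed
qed

lemma scale_supp:
  assumes "eta \<in> Bset s r" "scale s l x0 eta z \<noteq> 0" "\<forall>i. 0 < s i" "0 < l"
  shows "\<bar>z$i - x0$i\<bar> \<le> l powr real (s i)"
proof -
  have "eta (\<chi> i. l powr (- real (s i)) * (z $ i - x0 $ i)) \<noteq> 0"
    using assms(2) by (auto simp: scale_def)
  from Bset_supp[OF assms(1) this assms(3), of i]
  have "l powr (- real (s i)) * \<bar>z $ i - x0 $ i\<bar> \<le> 1" by (simp add: abs_mult)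
  hence "\<bar>z $ i - x0 $ i\<bar> \<le> 1 / l powr (- real (s i))"
    using assms(4) by (simp add: field_simps)
  thus ?thesis using assms(4) by (simp add: powr_minus divide_inverse)
qed

lemma scale_bound:
  assumes "\<forall>y. \<bar>eta y\<bar> \<le> 1" "0 < l"
  shows "\<bar>scale s l x0 eta z\<bar> \<le> l powr (- ssum s)"
proof -
  have "\<bar>scale s l x0 eta z\<bar> = l powr (- ssum s) * \<bar>eta (\<chi> i. l powr (- real (s i)) * (z $ i - x0 $ i))\<bar>"
    by (simp add: scale_def abs_mult)
  also have "\<dots> \<le> l powr (- ssum s) * 1" using assms by (intro mult_left_mono) auto
  finally show ?thesis by simp
qed

lemma lattice_Ints: "m \<in> lattice T \<Longrightarrow> m$i \<in> \<int>" and lattice_zero: "m \<in> lattice T \<Longrightarrow> i \<notin> T \<Longrightarrow> m$i = 0"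
  unfolding lattice_def by auto

lemma per_SC:
  assumes "eta \<in> Bset s r" "\<forall>i. 0 < s i" "0 < l"
    and "periodize T (scale s l x0 eta) x \<noteq> 0"
  shows "SC T (\<lambda>i. l powr real (s i)) x0 x"
proof -
  obtain m where m: "m \<in> lattice T" "scale s l x0 eta (x + m) \<noteq> 0"
    using periodize_nonzero[OF assms(4)] by blast
  show ?thesis unfolding SC_def
  proof
    fix i
    have "\<bar>(x + m)$i - x0$i\<bar> \<le> l powr real (s i)" by (rule scale_supp[OF assms(1) m(2) assms(2,3)])
    thus "\<exists>k\<in>\<int>. (i \<notin> T \<longrightarrow> k = 0) \<and> \<bar>x$i + k - x0$i\<bar> \<le> l powr real (s i)"
      using lattice_Ints[OF m(1)] lattice_zero[OF m(1)] by (intro bexI[of _ "m$i"]) auto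
  qed
qed

lemma per_bound:
  fixes x :: "real^'n::finite"
  assumes "eta \<in> Bset s r" "\<forall>i. 0 < s i" "0 < l" "l \<le> 1" "\<forall>y. \<bar>eta y\<bar> \<le> 1"
  shows "\<bar>periodize T (scale s l x0 eta) x\<bar> \<le> 3 ^ CARD('n) * l powr (- ssum s)"
proof -
  define S where "S i = \<int> \<inter> {x0$i - x$i - 1 .. x0$i - x$i - 1 + real 2}" for i
  define Bx where "Bx = {m::real^'n. \<forall>i. m$i \<in> S i}"
  have finS: "finite (S i)" and cardS: "card (S i) \<le> 3" for i
    using card_Ints_interval[of "x0$i - x$i - 1" 2] by (auto simp: S_def)
  have finB: "finite Bx" unfolding Bx_def by (rule finite_vec_box[OF finS])
  have cardB: "card Bx \<le> 3 ^ CARD('n)"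
  proof -
    have "card Bx = (\<Prod>i\<in>UNIV. card (S i))" unfolding Bx_def by (rule card_vec_box[OF finS])
    also have "\<dots> \<le> (\<Prod>i\<in>(UNIV::'n set). 3)" by (rule prod_mono) (use cardS in auto)
    finally show ?thesis by simp
  qed
  define F where "F = lattice T \<inter> Bx"
  have finF: "finite F" using finB by (simp add: F_def)
  have "periodize T (scale s l x0 eta) x = (\<Sum>m\<in>F. scale s l x0 eta (x + m))"
  proof (rule periodize_local[OF finF])
    show "F \<subseteq> lattice T" by (auto simp: F_def)
    fix m assume m: "m \<in> lattice T" "m \<notin> F"
    show "scale s l x0 eta (x + m) = 0"
    proof (rule ccontr)
      assume nz: "scale s l x0 eta (x + m) \<noteq> 0"
      have "m \<in> Bx" unfolding Bx_def S_def
      proof (intro CollectI allI IntI)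
        fix i
        show "m$i \<in> \<int>" using lattice_Ints[OF m(1)] .
        have "\<bar>(x + m)$i - x0$i\<bar> \<le> l powr real (s i)" by (rule scale_supp[OF assms(1) nz assms(2,3)])
        moreover have "l powr real (s i) \<le> 1" using assms(3,4) by (intro powr_le1) auto
        ultimately show "m$i \<in> {x0$i - x$i - 1 .. x0$i - x$i - 1 + real 2}" by auto
      qed
      thus False using m by (auto simp: F_def)
    qed
  qed
  hence "\<bar>periodize T (scale s l x0 eta) x\<bar> \<le> (\<Sum>m\<in>F. \<bar>scale s l x0 eta (x + m)\<bar>)"
    by (simp add: sum_abs)
  also have "\<dots> \<le> (\<Sum>m\<in>F. l powr (- ssum s))"
    by (rule sum_mono) (rule scale_bound[OF assms(5,3)])
  also have "\<dots> = real (card F) * l powr (- ssum s)" by simp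
  also have "\<dots> \<le> 3 ^ CARD('n) * l powr (- ssum s)"
  proof (rule mult_right_mono)
    have "card F \<le> card Bx" using finB by (auto simp: F_def intro: card_mono)
    thus "real (card F) \<le> 3 ^ CARD('n)" using cardB by (metis of_nat_le_iff of_nat_numeral of_nat_power order_trans)
  qed simp
  finally show ?thesis .
qed

lemma line_ev:
  fixes y :: "real^'n::finite"
  assumes "open U" "y \<in> U"
  shows "eventually (\<lambda>t. y + t *\<^sub>R v \<in> U) (nhds (0::real))"
proof -
  have "open ((\<lambda>t::real. y + t *\<^sub>R v) -` U)"
    by (rule continuous_open_vimage[OF assms(1)]) (intro continuous_intros)
  moreover have "(0::real) \<in> (\<lambda>t. y + t *\<^sub>R v) -` U" using assms by simp
  ultimately show ?thesis using eventually_nhds_in_open by fastforce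
qed

lemma Dlist_local:
  fixes f g :: "real^'n::finite \<Rightarrow> 'a::real_normed_vector"
  assumes "open U" "\<forall>y\<in>U. f y = g y"
  shows "y \<in> U \<Longrightarrow> Dlist is f y = Dlist is g y"
proof (induction "is" arbitrary: y)
  case Nil thus ?case using assms by simp
next
  case (Cons i "is")
  have ev: "eventually (\<lambda>t. t \<in> UNIV \<longrightarrow> Dlist is f (y + t *\<^sub>R axis i 1) = Dlist is g (y + t *\<^sub>R axis i 1)) (nhds (0::real))"
    using line_ev[OF assms(1) Cons.prems, of "axis i 1"] by eventually_elim (use Cons.IH in auto)
  show ?case
    unfolding Dlist.simps partial_def
    by (rule vector_derivative_cong_eq[OF ev]) auto
qed

lemma smooth_has_deriv:
  assumes "smooth_on UNIV f"
  shows "((\<lambda>t. Dlist is f (x + t *\<^sub>R axis i 1)) has_vector_derivative Dlist (i # is) f x) (at 0)"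
proof -
  have "(\<lambda>t. Dlist is f (x + t *\<^sub>R axis i 1)) differentiable (at 0)"
    using assms unfolding smooth_on_def by blast
  thus ?thesis unfolding vector_derivative_works by (simp add: partial_def)
qed

lemma smooth_localI:
  fixes f :: "real^'n::finite \<Rightarrow> 'a::real_normed_vector"
  assumes loc: "\<And>x. \<exists>U g. open U \<and> x \<in> U \<and> smooth_on UNIV g \<and> (\<forall>y\<in>U. f y = g y)"
  shows "smooth_on UNIV f"
  unfolding smooth_on_def
proof (intro allI conjI ballI)
  fix "is"
  show "continuous_on UNIV (Dlist is f)"
  proof (rule continuous_at_imp_continuous_on, intro ballI)
    fix x :: "real^'n"
    obtain U g where U: "open U" "x \<in> U" "smooth_on UNIV g" "\<forall>y\<in>U. f y = g y" using loc by blast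
    have "isCont (Dlist is g) x"
      using U(3) unfolding smooth_on_def by (simp add: continuous_on_eq_continuous_at)
    moreover have "eventually (\<lambda>y. Dlist is f y = Dlist is g y) (nhds x)"
      using eventually_nhds_in_open[OF U(1,2)] by eventually_elim (use Dlist_local[OF U(1,4)] in auto)
    ultimately show "isCont (Dlist is f) x" using isCont_cong by blast
  qed
  fix i and x :: "real^'n"
  obtain U g where U: "open U" "x \<in> U" "smooth_on UNIV g" "\<forall>y\<in>U. f y = g y" using loc by blast
  have ev: "eventually (\<lambda>t. t \<in> UNIV \<longrightarrow> Dlist is g (x + t *\<^sub>R axis i 1) = Dlist is f (x + t *\<^sub>R axis i 1)) (nhds (0::real))"
    using line_ev[OF U(1,2), of "axis i 1"] by eventually_elim (use Dlist_local[OF U(1,4)] in auto)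
  have "((\<lambda>t. Dlist is g (x + t *\<^sub>R axis i 1)) has_vector_derivative Dlist (i # is) g x) (at 0)"
    by (rule smooth_has_deriv[OF U(3)])
  hence "((\<lambda>t. Dlist is f (x + t *\<^sub>R axis i 1)) has_vector_derivative Dlist (i # is) g x) (at 0)"
    using has_vector_derivative_cong_ev[OF ev] Dlist_local[OF U(1,4) U(2)] by simp
  thus "(\<lambda>t. Dlist is f (x + t *\<^sub>R axis i 1)) differentiable (at 0)"
    by (rule differentiableI_vector)
qed

definition aff :: "('n::finite \<Rightarrow> real) \<Rightarrow> real^'n \<Rightarrow> real^'n \<Rightarrow> real^'n" where
  "aff a c y = (\<chi> j. a j * y$j + c$j)"

lemma aff_line: "aff a c (y + t *\<^sub>R axis i 1) = aff a c y + (a i * t) *\<^sub>R axis i 1"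
  by (simp add: aff_def vec_eq_iff axis_def algebra_simps)

lemma continuous_aff: "continuous_on S (aff a c)"
  unfolding aff_def by (intro continuous_intros)

lemma aff_deriv:
  fixes h :: "real^'n::finite \<Rightarrow> real"
  assumes "smooth_on UNIV h"
  shows "((\<lambda>t. k * Dlist is h (aff a c (y + t *\<^sub>R axis i 1))) has_vector_derivative
            k * (a i * Dlist (i # is) h (aff a c y))) (at 0)"
proof -
  have d1: "((\<lambda>t::real. a i * t) has_vector_derivative a i) (at 0)"
    using has_vector_derivative_mult_right[OF has_vector_derivative_id, of "a i"] by simp
  have d2: "((\<lambda>u. Dlist is h (aff a c y + u *\<^sub>R axis i 1)) has_vector_derivative Dlist (i # is) h (aff a c y)) (at ((\<lambda>t::real. a i * t) 0))"
    using smooth_has_deriv[OF assms] by simp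
  have "(((\<lambda>u. Dlist is h (aff a c y + u *\<^sub>R axis i 1)) \<circ> (\<lambda>t. a i * t)) has_vector_derivative (a i *\<^sub>R Dlist (i # is) h (aff a c y))) (at 0)"
    by (rule vector_diff_chain_at[OF d1 d2])
  hence "((\<lambda>t. Dlist is h (aff a c (y + t *\<^sub>R axis i 1))) has_vector_derivative (a i * Dlist (i # is) h (aff a c y))) (at 0)"
    by (simp add: aff_line o_def)
  thus ?thesis by (rule has_vector_derivative_mult_right)
qed

lemma Dlist_aff:
  fixes h :: "real^'n::finite \<Rightarrow> real"
  assumes "smooth_on UNIV h"
  shows "Dlist is (\<lambda>y. k * h (aff a c y)) = (\<lambda>y. k * prod_list (map a is) * Dlist is h (aff a c y))"
proof (induction "is")
  case Nil thus ?case by simp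
next
  case (Cons i "is")
  show ?case
  proof
    fix y
    have "Dlist (i # is) (\<lambda>y. k * h (aff a c y)) y = partial i (\<lambda>y. k * prod_list (map a is) * Dlist is h (aff a c y)) y"
      using Cons.IH by simp
    also have "\<dots> = k * prod_list (map a is) * (a i * Dlist (i # is) h (aff a c y))"
      unfolding partial_def by (rule vector_derivative_at[OF aff_deriv[OF assms]])
    finally show "Dlist (i # is) (\<lambda>y. k * h (aff a c y)) y = k * prod_list (map a (i # is)) * Dlist (i # is) h (aff a c y)"
      by (simp add: algebra_simps)
  qed
qed

lemma smooth_aff:
  fixes h :: "real^'n::finite \<Rightarrow> real"
  assumes "smooth_on UNIV h"
  shows "smooth_on UNIV (\<lambda>y. k * h (aff a c y))"
  unfolding smooth_on_def Dlist_aff[OF assms]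
proof (intro allI conjI ballI)
  fix "is"
  have "continuous_on UNIV (Dlist is h)" using assms unfolding smooth_on_def by blast
  thus "continuous_on UNIV (\<lambda>y. k * prod_list (map a is) * Dlist is h (aff a c y))"
    by (intro continuous_intros continuous_on_compose2[of UNIV "Dlist is h" UNIV "aff a c"] continuous_aff) auto
  fix i and x :: "real^'n"
  show "(\<lambda>t. k * prod_list (map a is) * Dlist is h (aff a c (x + t *\<^sub>R axis i 1))) differentiable (at 0)"
    using aff_deriv[OF assms, of "k * prod_list (map a is)" "is" a c x i] by (rule differentiableI_vector)
qed

lemma Dlist_sum:
  fixes g :: "'m \<Rightarrow> real^'n::finite \<Rightarrow> real"
  assumes "\<And>m. m \<in> F \<Longrightarrow> smooth_on UNIV (g m)"
  shows "Dlist is (\<lambda>y. \<Sum>m\<in>F. g m y) = (\<lambda>y. \<Sum>m\<in>F. Dlist is (g m) y)"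
proof (induction "is")
  case Nil thus ?case by simp
next
  case (Cons i "is")
  show ?case
  proof
    fix y
    have "Dlist (i # is) (\<lambda>y. \<Sum>m\<in>F. g m y) y = partial i (\<lambda>y. \<Sum>m\<in>F. Dlist is (g m) y) y"
      using Cons.IH by simp
    also have "\<dots> = (\<Sum>m\<in>F. Dlist (i # is) (g m) y)"
      unfolding partial_def
      by (rule vector_derivative_at, rule has_vector_derivative_sum, rule smooth_has_deriv, rule assms)
    finally show "Dlist (i # is) (\<lambda>y. \<Sum>m\<in>F. g m y) y = (\<Sum>m\<in>F. Dlist (i # is) (g m) y)" .
  qed
qed

lemma smooth_sum:
  fixes g :: "'m \<Rightarrow> real^'n::finite \<Rightarrow> real"
  assumes "\<And>m. m \<in> F \<Longrightarrow> smooth_on UNIV (g m)"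
  shows "smooth_on UNIV (\<lambda>y. \<Sum>m\<in>F. g m y)"
  unfolding smooth_on_def
proof (intro allI conjI ballI)
  fix "is"
  show "continuous_on UNIV (Dlist is (\<lambda>y. \<Sum>m\<in>F. g m y))"
  proof -
    have e: "Dlist is (\<lambda>y. \<Sum>m\<in>F. g m y) = (\<lambda>y. \<Sum>m\<in>F. Dlist is (g m) y)" by (rule Dlist_sum[OF assms])
    show ?thesis unfolding e using assms unfolding smooth_on_def by (intro continuous_on_sum) blast
  qed
  fix i and x :: "real^'n"
  have hd: "((\<lambda>t. \<Sum>m\<in>F. Dlist is (g m) (x + t *\<^sub>R axis i 1)) has_vector_derivative (\<Sum>m\<in>F. Dlist (i # is) (g m) x)) (at 0)"
    by (rule has_vector_derivative_sum, rule smooth_has_deriv, rule assms)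
  have e: "Dlist is (\<lambda>y. \<Sum>m\<in>F. g m y) = (\<lambda>y. \<Sum>m\<in>F. Dlist is (g m) y)" by (rule Dlist_sum[OF assms])
  show "(\<lambda>t. Dlist is (\<lambda>y. \<Sum>m\<in>F. g m y) (x + t *\<^sub>R axis i 1)) differentiable (at 0)"
    unfolding e by (rule differentiableI_vector[OF hd])
qed

lemma Dlist_zero: "Dlist is (\<lambda>_::real^'n::finite. 0::real) = (\<lambda>_. 0)"
  by (induction "is") (auto simp: partial_def fun_eq_iff)

lemma Bset_smooth: "eta \<in> Bset s r \<Longrightarrow> smooth_on UNIV eta"
  by (simp add: Bset_def test_fn_def)

lemma Bset_abs_le:
  fixes eta :: "real^'n::finite \<Rightarrow> real"
  assumes eta: "eta \<in> Bset s r" and s_pos: "\<forall>i. 0 < s i"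
  shows "\<bar>eta y\<bar> \<le> 1"
proof -
  have sm: "smooth_on UNIV eta" using Bset_smooth[OF eta] .
  define Q :: "(real^'n) set" where "Q = cbox (\<chi> i. -1) (\<chi> i. 1)"
  have Q: "compact Q" by (simp add: Q_def)
  have zero: "Dlist is eta z = 0" if "z \<notin> Q" for "is" z
  proof -
    have "open (- Q)" using Q by (simp add: compact_imp_closed open_Compl)
    moreover have "\<forall>y\<in>-Q. eta y = (\<lambda>_. 0) y"
    proof
      fix y assume "y \<in> - Q"
      hence "\<not> (\<forall>i. ((\<chi> i. -1)::real^'n)$i \<le> y$i \<and> y$i \<le> ((\<chi> i. 1)::real^'n)$i)"
        by (simp add: Q_def mem_box_cart)
      then obtain i where "\<not> (-1 \<le> y$i \<and> y$i \<le> 1)" by auto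
      hence "\<not> \<bar>y$i\<bar> \<le> 1" by linarith
      thus "eta y = (\<lambda>_. 0) y" using Bset_supp[OF eta _ s_pos, of y i] by auto
    qed
    ultimately have "Dlist is eta z = Dlist is (\<lambda>_. 0) z" using that by (intro Dlist_local) auto
    thus ?thesis by (simp add: Dlist_zero)
  qed
  have bd: "\<exists>B. \<forall>z. \<bar>Dlist is eta z\<bar> \<le> B" for "is"
  proof -
    have "continuous_on Q (Dlist is eta)"
      using sm unfolding smooth_on_def by (blast intro: continuous_on_subset)
    hence "bounded (Dlist is eta ` Q)" using Q by (intro compact_imp_bounded compact_continuous_image)
    then obtain B where B: "\<forall>v\<in>Dlist is eta ` Q. norm v \<le> B" by (auto simp: bounded_iff)
    show ?thesis
    proof (intro exI allI)
      fix z show "\<bar>Dlist is eta z\<bar> \<le> max B 0"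
        using B zero[of z "is"] by (cases "z \<in> Q") auto
    qed
  qed
  define LS where "LS = {is :: 'n list. set is \<subseteq> UNIV \<and> length is \<le> r}"
  have finLS: "finite LS" unfolding LS_def by (rule finite_lists_length_le) simp
  have sub: "(\<lambda>ix. \<bar>Dlist (fst ix) eta (snd ix)\<bar>) ` {(is, x). length is \<le> r} \<subseteq> (\<Union>is\<in>LS. range (\<lambda>x. \<bar>Dlist is eta x\<bar>))"
    by (auto simp: LS_def)
  have bddU: "bdd_above (\<Union>is\<in>LS. range (\<lambda>x. \<bar>Dlist is eta x\<bar>))"
    unfolding bdd_above_UN[OF finLS]
  proof
    fix "is" assume "is \<in> LS"
    obtain B where "\<forall>z. \<bar>Dlist is eta z\<bar> \<le> B" using bd by blast
    thus "bdd_above (range (\<lambda>x. \<bar>Dlist is eta x\<bar>))" by (intro bdd_aboveI2) auto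
  qed
  have bdd: "bdd_above ((\<lambda>ix. \<bar>Dlist (fst ix) eta (snd ix)\<bar>) ` {(is, x). length is \<le> r})"
    by (rule bdd_above_mono[OF bddU sub])
  have le1: "\<bar>Dlist (fst ([], y)) eta (snd ([], y))\<bar> \<le> Cnorm r eta" unfolding Cnorm_def
    using cSUP_upper[OF _ bdd, of "([], y)"] by simp
  have "Cnorm r eta \<le> 1" using eta by (simp add: Bset_def)
  thus ?thesis using le1 by simp
qed

lemma phi_aff:
  "scale s l x0 eta (y + m) = l powr (- ssum s) *
     eta (aff (\<lambda>j. l powr (- real (s j))) (\<chi> j. l powr (- real (s j)) * (m$j - x0$j)) y)"
proof -
  have "(\<chi> i. l powr (- real (s i)) * ((y + m) $ i - x0 $ i)) =
        aff (\<lambda>j. l powr (- real (s j))) (\<chi> j. l powr (- real (s j)) * (m$j - x0$j)) y"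
    by (simp add: aff_def vec_eq_iff algebra_simps)
  thus ?thesis by (simp add: scale_def)
qed

lemma lattice_shift:
  assumes "i \<in> T" "m \<in> lattice T"
  shows "m + axis i 1 \<in> lattice T" "m - axis i 1 \<in> lattice T"
  using assms by (auto simp: lattice_def axis_def)

lemma per_test:
  fixes eta :: "real^'n::finite \<Rightarrow> real"
  assumes eta: "eta \<in> Bset s r" and s_pos: "\<forall>i. 0 < s i" and l: "0 < l" "l \<le> 1"
  shows "test_fn T (periodize T (scale s l x0 eta))"
  unfolding test_fn_def
proof (intro conjI)
  define a where "a j = l powr (- real (s j))" for j
  define cm where "cm m = (\<chi> j. a j * (m$j - x0$j))" for m :: "real^'n"
  define k where "k = l powr (- ssum s)"
  have phi: "scale s l x0 eta (y + m) = k * eta (aff a (cm m) y)" for y m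
    unfolding a_def cm_def k_def by (rule phi_aff)
  have sm: "smooth_on UNIV eta" by (rule Bset_smooth[OF eta])
  show "smooth_on UNIV (periodize T (scale s l x0 eta))"
  proof (rule smooth_localI)
    fix x1 :: "real^'n"
    define Bx where "Bx = {m::real^'n. \<forall>i. m$i \<in> \<int> \<inter> {x0$i - x1$i - 2 .. x0$i - x1$i - 2 + real 4}}"
    have finB: "finite Bx" unfolding Bx_def
      by (rule finite_vec_box) (use card_Ints_interval in blast)
    define F where "F = lattice T \<inter> Bx"
    have finF: "finite F" using finB by (simp add: F_def)
    define g where "g y = (\<Sum>m\<in>F. k * eta (aff a (cm m) y))" for y
    have "smooth_on UNIV g" unfolding g_def
      by (rule smooth_sum, rule smooth_aff[OF sm])
    moreover have "\<forall>y\<in>ball x1 1. periodize T (scale s l x0 eta) y = g y"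
    proof
      fix y assume y: "y \<in> ball x1 1"
      have "periodize T (scale s l x0 eta) y = (\<Sum>m\<in>F. scale s l x0 eta (y + m))"
      proof (rule periodize_local[OF finF])
        show "F \<subseteq> lattice T" by (auto simp: F_def)
        fix m assume m: "m \<in> lattice T" "m \<notin> F"
        show "scale s l x0 eta (y + m) = 0"
        proof (rule ccontr)
          assume nz: "scale s l x0 eta (y + m) \<noteq> 0"
          have "m \<in> Bx" unfolding Bx_def
          proof (intro CollectI allI IntI)
            fix i
            show "m$i \<in> \<int>" using lattice_Ints[OF m(1)] .
            have "\<bar>(y + m)$i - x0$i\<bar> \<le> l powr real (s i)" by (rule scale_supp[OF eta nz s_pos l(1)])
            moreover have "l powr real (s i) \<le> 1" using l by (intro powr_le1) auto
            moreover have "\<bar>(x1 - y)$i\<bar> \<le> norm (x1 - y)" by (rule component_le_norm_cart)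
            moreover have "norm (x1 - y) < 1" using y by (simp add: dist_norm)
            ultimately show "m$i \<in> {x0$i - x1$i - 2 .. x0$i - x1$i - 2 + real 4}" by auto
          qed
          thus False using m by (auto simp: F_def)
        qed
      qed
      thus "periodize T (scale s l x0 eta) y = g y" by (simp add: g_def phi)
    qed
    ultimately show "\<exists>U g. open U \<and> x1 \<in> U \<and> smooth_on UNIV g \<and> (\<forall>y\<in>U. periodize T (scale s l x0 eta) y = g y)"
      by (intro exI[of _ "ball x1 1"] exI[of _ g]) auto
  qed
  show "periodic_in T (periodize T (scale s l x0 eta))"
    unfolding periodic_in_def
  proof (intro ballI allI)
    fix i x assume i: "i \<in> T"
    have bij: "bij_betw (\<lambda>m. axis i 1 + m) (lattice T) (lattice T)"
    proof (rule bij_betw_byWitness[where f'="\<lambda>m. m - axis i 1"])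
      show "\<forall>m\<in>lattice T. axis i 1 + m - axis i 1 = m" by simp
      show "\<forall>m\<in>lattice T. axis i 1 + (m - axis i 1) = m" by simp
      show "(\<lambda>m. axis i 1 + m) ` lattice T \<subseteq> lattice T" using lattice_shift(1)[OF i] by (auto simp: add.commute)
      show "(\<lambda>m. m - axis i 1) ` lattice T \<subseteq> lattice T" using lattice_shift(2)[OF i] by auto
    qed
    have "periodize T (scale s l x0 eta) (x + axis i 1) = infsum (\<lambda>m. scale s l x0 eta (x + (axis i 1 + m))) (lattice T)"
      unfolding periodize_def by (simp add: add.assoc)
    also have "\<dots> = infsum (\<lambda>m. scale s l x0 eta (x + m)) (lattice T)"
      by (rule infsum_reindex_bij_betw[OF bij, of "\<lambda>m. scale s l x0 eta (x + m)"])
    finally show "periodize T (scale s l x0 eta) (x + axis i 1) = periodize T (scale s l x0 eta) x"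
      unfolding periodize_def .
  qed
  show "\<exists>R. supp_bounded T R (periodize T (scale s l x0 eta))"
  proof (intro exI[of _ "(\<Sum>j\<in>UNIV. \<bar>x0$j\<bar>) + 1"])
    show "supp_bounded T ((\<Sum>j\<in>UNIV. \<bar>x0$j\<bar>) + 1) (periodize T (scale s l x0 eta))"
      unfolding supp_bounded_def
    proof (intro allI impI)
      fix x i assume nz: "periodize T (scale s l x0 eta) x \<noteq> 0" and i: "i \<notin> T"
      have "SC T (\<lambda>i. l powr real (s i)) x0 x" by (rule per_SC[OF eta s_pos l(1) nz])
      then obtain kk where kk: "i \<notin> T \<longrightarrow> kk = 0" "\<bar>x$i + kk - x0$i\<bar> \<le> l powr real (s i)"
        unfolding SC_def by blast
      have "l powr real (s i) \<le> 1" using l by (intro powr_le1) auto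
      moreover have "\<bar>x0$i\<bar> \<le> (\<Sum>j\<in>UNIV. \<bar>x0$j\<bar>)" by (rule member_le_sum) auto
      ultimately show "\<bar>x$i\<bar> \<le> (\<Sum>j\<in>UNIV. \<bar>x0$j\<bar>) + 1" using kk i by auto
    qed
  qed
qed

lemma pairing_scaled:
  fixes s :: "'n::finite \<Rightarrow> nat" and K :: "real^'n \<Rightarrow> complex"
  assumes s_pos: "\<forall>i. 0 < s i" and zeta_range: "- ssum s < zeta" "zeta < 0"
    and K_class: "kernel_class s T zeta K"
  shows "\<exists>D\<ge>0. \<forall>x0 eta l. eta \<in> Bset s r \<longrightarrow> 0 < l \<longrightarrow> l \<le> 1 \<longrightarrow>
           cmod (pairing T (periodize T (scale s l x0 eta)) K) \<le> D * l powr zeta"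
proof -
  define S where "S = ssum s"
  have S: "0 < S" using ssum_pos[OF s_pos] by (simp add: S_def)
  define b where "b = zeta / S"
  have b: "-1 < b" "b \<le> 0" using zeta_range S by (auto simp: b_def field_simps S_def)
  obtain C0' where C0': "\<forall>is z. sum_list (map s is) \<le> 0 \<longrightarrow> z \<notin> lattice T \<longrightarrow>
        tnorm s T z powr (real (sum_list (map s is)) - zeta) * norm (Dlist is K z) \<le> C0'"
    using K_class unfolding kernel_class_def by blast
  define C0 where "C0 = max C0' 1"
  have C0: "0 < C0" by (simp add: C0_def)
  have KB: "\<forall>z. z \<notin> lattice T \<longrightarrow> tnorm s T z powr (- zeta) * cmod (K z) \<le> C0"
  proof (intro allI impI)
    fix z assume "z \<notin> lattice T"
    thus "tnorm s T z powr (- zeta) * cmod (K z) \<le> C0" using C0'[rule_format, of "[]" z] by (simp add: C0_def)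
  qed
  have Kpt: "\<forall>z. ennreal (cmod (K z)) \<le> ennreal C0 * (\<Prod>i\<in>UNIV. epow b (tc T i (z$i)))"
    using K_pt[OF s_pos zeta_range(2) C0 KB] by (simp add: b_def S_def)
  define c1 where "c1 = 3 * (2 * (2 powr (b+1) / (b+1)))"
  have c1: "0 \<le> c1" using b by (simp add: c1_def)
  define D where "D = (3 ^ CARD('n))\<^sup>2 * C0 * c1 ^ CARD('n) * 8 ^ CARD('n)"
  have D: "0 \<le> D" using C0 c1 by (simp add: D_def)
  show ?thesis
  proof (intro exI[of _ D] conjI allI impI D)
    fix x0 :: "real^'n" and eta and l :: real assume eta: "eta \<in> Bset s r" and l: "0 < l" "l \<le> 1"
    define L where "L i = l powr real (s i)" for i
    define A where "A = 3 ^ CARD('n) * l powr (- S)"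
    have L: "\<forall>i. 0 \<le> L i \<and> L i \<le> 1" using l by (auto simp: L_def intro: powr_le1)
    have A: "0 \<le> A" by (simp add: A_def)
    have "cmod (pairing T (periodize T (scale s l x0 eta)) K)
       \<le> A * (A * C0 * (\<Prod>i\<in>UNIV. 3*(2*((2*L i) powr (b+1)/(b+1))))) * (\<Prod>i\<in>UNIV. 8 * L i)"
    proof (rule pairing_bound[OF L b A less_imp_le[OF C0] Kpt])
      show "\<forall>x. periodize T (scale s l x0 eta) x \<noteq> 0 \<longrightarrow> SC T L x0 x"
        using per_SC[OF eta s_pos l(1)] unfolding L_def by blast
      show "\<forall>x. \<bar>periodize T (scale s l x0 eta) x\<bar> \<le> A"
        using per_bound[OF eta s_pos l allI[OF Bset_abs_le[OF eta s_pos]]] unfolding A_def S_def by blast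
    qed
    also have "(\<Prod>i\<in>UNIV. 3*(2*((2*L i) powr (b+1)/(b+1)))) = (\<Prod>i\<in>(UNIV::'n set). c1 * l powr (real (s i) * (b+1)))"
    proof (rule prod.cong[OF refl])
      fix i
      have "(2*L i) powr (b+1) = 2 powr (b+1) * l powr (real (s i) * (b+1))"
        using l by (simp add: L_def powr_mult powr_powr)
      thus "3*(2*((2*L i) powr (b+1)/(b+1))) = c1 * l powr (real (s i) * (b+1))"
        by (simp add: c1_def)
    qed
    also have "\<dots> = c1 ^ CARD('n) * l powr (S + zeta)"
    proof -
      have "(\<Prod>i\<in>(UNIV::'n set). l powr (real (s i) * (b+1))) = l powr (\<Sum>i\<in>UNIV. real (s i) * (b+1))"
        using l by (simp add: powr_sum)
      also have "(\<Sum>i\<in>UNIV. real (s i) * (b+1)) = S + zeta"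
      proof -
        have "(\<Sum>i\<in>UNIV. real (s i) * (b+1)) = S * (b+1)"
          by (simp add: sum_distrib_right[symmetric] S_def ssum_def)
        also have "\<dots> = S + zeta" using S by (simp add: b_def field_simps)
        finally show ?thesis .
      qed
      finally show ?thesis by (simp add: prod.distrib)
    qed
    also have "(\<Prod>i\<in>UNIV. 8 * L i) = 8 ^ CARD('n) * l powr S"
    proof -
      have "(\<Prod>i\<in>UNIV. 8 * L i) = 8 ^ CARD('n) * (\<Prod>i\<in>UNIV. l powr real (s i))"
        by (simp add: prod.distrib L_def)
      also have "(\<Prod>i\<in>UNIV. l powr real (s i)) = l powr S"
        using l by (simp add: powr_sum S_def ssum_def)
      finally show ?thesis .
    qed
    also have "A * (A * C0 * (c1 ^ CARD('n) * l powr (S + zeta))) * (8 ^ CARD('n) * l powr S) = D * l powr zeta"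
    proof -
      have "l powr (- S) * (l powr (- S) * (l powr (S + zeta) * l powr S)) = l powr zeta"
        using l by (simp add: powr_add[symmetric])
      thus ?thesis unfolding A_def D_def by (simp add: power2_eq_square algebra_simps)
    qed
    finally show "cmod (pairing T (periodize T (scale s l x0 eta)) K) \<le> D * l powr zeta" .
  qed
qed

theorem propositionA11:
  fixes s :: "'n::finite \<Rightarrow> nat"
    and T :: "'n set"
    and P :: "('e::real_vector \<Rightarrow> real) set"
    and xi :: "(real^'n \<Rightarrow> real) \<Rightarrow> 'e"
    and K :: "real^'n \<Rightarrow> complex"
    and zeta :: real
  assumes s_pos: "\<forall>i. 0 < s i"
    and P_semi: "\<forall>p\<in>P. is_seminorm p"
    and xi_distr: "distribution T P xi"
    and zeta_range: "- ssum s < zeta" "zeta < 0"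
    and K_class: "kernel_class s T zeta K"
    and bound: "\<forall>p\<in>P. \<exists>C. \<forall>f. test_fn T f \<longrightarrow> (p (xi f))\<^sup>2 \<le> C * cmod (pairing T f K)"
  shows "holder_besov s (zeta / 2) P (\<lambda>phi. xi (periodize T phi))"
  unfolding holder_besov_def
proof (intro allI impI)
  fix r :: nat and Kc :: "(real^'n) set" and p
  assume "real r > \<bar>zeta / 2\<bar>" "compact Kc \<and> p \<in> P"
  hence p: "p \<in> P" by simp
  obtain D where D: "0 \<le> D" and DB: "\<forall>x0 eta l. eta \<in> Bset s r \<longrightarrow> 0 < l \<longrightarrow> l \<le> 1 \<longrightarrow>
           cmod (pairing T (periodize T (scale s l x0 eta)) K) \<le> D * l powr zeta"
    using pairing_scaled[OF s_pos zeta_range K_class, of r] by blast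
  obtain C where C: "\<forall>f. test_fn T f \<longrightarrow> (p (xi f))\<^sup>2 \<le> C * cmod (pairing T f K)"
    using bound p by blast
  define E where "E = sqrt (max C 0 * D)"
  have pnn: "0 \<le> p v" for v using P_semi p by (auto simp: is_seminorm_def)
  have key: "l powr (- (zeta / 2)) * p (xi (periodize T (scale s l x0 eta))) \<le> E"
    if eta: "eta \<in> Bset s r" and l: "0 < l" "l \<le> 1" for x0 eta l
  proof -
    let ?f = "periodize T (scale s l x0 eta)"
    have "(p (xi ?f))\<^sup>2 \<le> C * cmod (pairing T ?f K)"
      using C per_test[OF eta s_pos l] by blast
    also have "\<dots> \<le> max C 0 * cmod (pairing T ?f K)" by (intro mult_right_mono) auto
    also have "\<dots> \<le> max C 0 * (D * l powr zeta)"
      using DB eta l by (intro mult_left_mono) auto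
    finally have sq: "(p (xi ?f))\<^sup>2 \<le> max C 0 * D * l powr zeta" by (simp add: mult.assoc)
    have "p (xi ?f) = sqrt ((p (xi ?f))\<^sup>2)" using pnn by simp
    also have "\<dots> \<le> sqrt (max C 0 * D * l powr zeta)" using sq by (rule real_sqrt_le_mono)
    also have "\<dots> = E * sqrt (l powr zeta)" by (simp add: E_def real_sqrt_mult)
    also have "sqrt (l powr zeta) = l powr (zeta / 2)"
      using l by (simp add: powr_half_sqrt[symmetric] powr_powr)
    finally have "p (xi ?f) \<le> E * l powr (zeta / 2)" .
    hence "l powr (- (zeta / 2)) * p (xi ?f) \<le> l powr (- (zeta / 2)) * (E * l powr (zeta / 2))"
      by (intro mult_left_mono) auto
    also have "\<dots> = E" using l by (simp add: powr_minus field_simps)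
    finally show ?thesis .
  qed
  have "(\<exists>C. \<forall>x\<in>Kc. \<forall>eta\<in>Bmom s r (zeta / 2). \<forall>l\<in>{0<..1}.
          l powr - (zeta / 2) * p (xi (periodize T (scale s l x eta))) \<le> C)"
    using key by (intro exI[of _ E]) (auto simp: Bmom_def)
  moreover have "\<exists>C. \<forall>x\<in>Kc. \<forall>eta\<in>Bset s r. p (xi (periodize T (scale s 1 x eta))) \<le> C"
    using key[of _ 1] by (intro exI[of _ E]) auto
  ultimately show "(\<exists>C. \<forall>x\<in>Kc. \<forall>eta\<in>Bmom s r (zeta / 2). \<forall>l\<in>{0<..1}.
          l powr - (zeta / 2) * p (xi (periodize T (scale s l x eta))) \<le> C) \<and>
        (\<exists>C. \<forall>x\<in>Kc. \<forall>eta\<in>Bset s r. p (xi (periodize T (scale s 1 x eta))) \<le> C)" by blast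
qed


end
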